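(* With optimal play by both players, the transversal $3$-game is a draw: each of the two players has a strategy guaranteeing that they do not lose.
   Context: A transversal of an $n\times n$ grid is a set of $n$ cells no two of which lie in the same row or the same column. The transversal $n$-game is played on an $n\times n$ grid by two players who alternate moves, player 1 moving first. On each move, the player to move claims one currently unoccupied cell (player 1 marks it $X$, player 2 marks it $O$). The first player (if any) to have claimed all $n$ cells of some transversal wins. If the grid becomes completely filled and neither player has claimed a transversal, the game is a draw. *)

theory Defs
  imports Main
begin

definition grid :: "nat \<Rightarrow> (nat \<times> nat) set" where
  "grid n = {..<n} \<times> {..<n}"

definition transversal :: "nat \<Rightarrow> (nat \<times> nat) set \<Rightarrow> bool" where
  "transversal n T \<longleftrightarrow> T \<subseteq> grid n \<and> card T = n \<and> inj_on fst T \<and> inj_on snd T"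

text \<open>A play history is the list of claimed cells in order.  Moves with even index
  are made by player 1 (coded 0, marks X), odd index by player 2 (coded 1, marks O).\<close>
definition claimed :: "nat \<Rightarrow> (nat \<times> nat) list \<Rightarrow> (nat \<times> nat) set" where
  "claimed p h = {h ! k | k. k < length h \<and> k mod 2 = p}"

definition has_transversal :: "nat \<Rightarrow> (nat \<times> nat) set \<Rightarrow> bool" where
  "has_transversal n S \<longleftrightarrow> (\<exists>T. transversal n T \<and> T \<subseteq> S)"

definition game_over :: "nat \<Rightarrow> (nat \<times> nat) list \<Rightarrow> bool" where
  "game_over n h \<longleftrightarrow> has_transversal n (claimed 0 h) \<or> has_transversal n (claimed 1 h)
      \<or> length h = n * n"

definition legal_play :: "nat \<Rightarrow> (nat \<times> nat) list \<Rightarrow> bool" where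
  "legal_play n h \<longleftrightarrow> distinct h \<and> set h \<subseteq> grid n \<and>
      (\<forall>k < length h. \<not> game_over n (take k h))"

definition follows :: "nat \<Rightarrow> ((nat \<times> nat) list \<Rightarrow> nat \<times> nat) \<Rightarrow> (nat \<times> nat) list \<Rightarrow> bool" where
  "follows p s h \<longleftrightarrow> (\<forall>k < length h. k mod 2 = p \<longrightarrow> h ! k = s (take k h))"

definition legal_strategy :: "nat \<Rightarrow> nat \<Rightarrow> ((nat \<times> nat) list \<Rightarrow> nat \<times> nat) \<Rightarrow> bool" where
  "legal_strategy n p s \<longleftrightarrow> (\<forall>h. legal_play n h \<and> \<not> game_over n h \<and> length h mod 2 = p
      \<and> follows p s h \<longrightarrow> s h \<in> grid n - set h)"

definition nonlosing_strategy :: "nat \<Rightarrow> nat \<Rightarrow> ((nat \<times> nat) list \<Rightarrow> nat \<times> nat) \<Rightarrow> bool" where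
  "nonlosing_strategy n p s \<longleftrightarrow> legal_strategy n p s \<and>
     (\<forall>h. legal_play n h \<and> game_over n h \<and> follows p s h \<longrightarrow>
        \<not> has_transversal n (claimed (1 - p) h))"

end

theory Submission
  imports Defs
begin

definition cellsL :: "(nat \<times> nat) list" where
  "cellsL = [(0,0),(0,1),(0,2),(1,0),(1,1),(1,2),(2,0),(2,1),(2,2)]"

definition transL :: "(nat \<times> nat) list list" where
  "transL = [[(0,0),(1,1),(2,2)],[(0,0),(1,2),(2,1)],[(0,1),(1,0),(2,2)],
             [(0,1),(1,2),(2,0)],[(0,2),(1,0),(2,1)],[(0,2),(1,1),(2,0)]]"

definition cl :: "nat \<Rightarrow> (nat \<times> nat) list \<Rightarrow> (nat \<times> nat) list" where
  "cl p h = map (nth h) (filter (\<lambda>k. k mod 2 = p) [0..<length h])"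

definition hasT :: "(nat \<times> nat) list \<Rightarrow> bool" where
  "hasT L \<longleftrightarrow> (\<exists>t\<in>set transL. \<forall>x\<in>set t. x \<in> set L)"

definition gain :: "(nat \<times> nat) list \<Rightarrow> (nat \<times> nat) list \<Rightarrow> nat \<times> nat \<Rightarrow> nat" where
  "gain M Q c = sum_list (map (\<lambda>t. if c \<in> set t \<and> (\<forall>x\<in>set t. x \<notin> set M)
       then length (filter (\<lambda>x. x \<in> set Q) t) else 0) transL)"

fun pick :: "((nat \<times> nat) \<Rightarrow> nat) \<Rightarrow> (nat \<times> nat) list \<Rightarrow> nat \<times> nat" where
  "pick g [] = (0,0)"
| "pick g [c] = c"
| "pick g (c # cs) = (let d = pick g cs in if g d \<le> g c then c else d)"

definition strat :: "(nat \<times> nat) list \<Rightarrow> nat \<times> nat" where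
  "strat h = pick (gain (cl (length h mod 2) h) (cl (1 - length h mod 2) h))
                  (filter (\<lambda>c. c \<notin> set h) cellsL)"

definition go :: "(nat \<times> nat) list \<Rightarrow> bool" where
  "go h \<longleftrightarrow> hasT (cl 0 h) \<or> hasT (cl 1 h) \<or> length h = 9"

definition appl :: "'a \<Rightarrow> ('a \<Rightarrow> bool) \<Rightarrow> bool" where "appl c F = F c"

lemma appl_weak_cong[cong]: "c = d \<Longrightarrow> appl c F = appl d F" by simp

fun chk :: "nat \<Rightarrow> nat \<Rightarrow> (nat \<times> nat) list \<Rightarrow> bool" where
  "chk 0 p h = False"
| "chk (Suc f) p h = (if go h then \<not> hasT (cl (1 - p) h)
     else if length h mod 2 = p then
        appl (strat h) (\<lambda>c. c \<in> set cellsL \<and> c \<notin> set h \<and> chk f p (h @ [c]))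
     else list_all (\<lambda>c. chk f p (h @ [c])) (filter (\<lambda>c. c \<notin> set h) cellsL))"

lemma list_all_weak_cong[cong]: "xs = ys \<Longrightarrow> list_all P xs = list_all P ys" by simp

lemma l3: "{..<3::nat} = {0,1,2}" by auto

lemma grid3: "grid 3 = set cellsL"
  unfolding grid_def cellsL_def l3 by auto

lemma trL: "t \<in> set transL \<Longrightarrow> transversal 3 (set t)"
  unfolding transL_def by (simp add: transversal_def grid_def l3) (elim disjE; simp)

lemma witL: "\<lbrakk>a \<in> {0,1,2}; b \<in> {0,1,2::nat}; c \<in> {0,1,2}; a\<noteq>b; a\<noteq>c;b\<noteq>c\<rbrakk> \<Longrightarrow> [(0,a),(1,b),(2,c)] \<in> set transL"
  unfolding transL_def by (simp only: insert_iff empty_iff) (elim disjE; simp)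

lemma claimed_cl: "claimed p h = set (cl p h)"
  by (auto simp: claimed_def cl_def)

lemma trans_row:
  assumes "transversal 3 T" "i < 3"
  shows "\<exists>a. (i,a) \<in> T"
proof -
  have sub: "T \<subseteq> grid 3" and c: "card T = 3" and inj: "inj_on fst T"
    using assms(1) by (auto simp: transversal_def)
  have fin: "finite T" using c by (metis card.infinite zero_neq_numeral)
  have "fst ` T \<subseteq> {..<3}" using sub by (auto simp: grid_def)
  moreover have "card (fst ` T) = card {..<3::nat}" using card_image[OF inj] c by simp
  ultimately have "fst ` T = {..<3}" by (simp add: card_subset_eq)
  then have "i \<in> fst ` T" using assms(2) by simp
  then show ?thesis by force
qed

lemma hasT_iff: "has_transversal 3 (set L) \<longleftrightarrow> hasT L"
proof
  assume "has_transversal 3 (set L)"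
  then obtain T where T: "transversal 3 T" "T \<subseteq> set L" by (auto simp: has_transversal_def)
  obtain a where a: "(0,a) \<in> T" using trans_row[OF T(1)] by fastforce
  obtain b where b: "(1,b) \<in> T" using trans_row[OF T(1)] by fastforce
  obtain c where c: "(2,c) \<in> T" using trans_row[OF T(1)] by fastforce
  have sub: "T \<subseteq> grid 3" and inj: "inj_on snd T" using T(1) by (auto simp: transversal_def)
  have ab: "a \<noteq> b"
  proof
    assume "a = b"
    then have "(0::nat,a) = (1,b)" using inj_onD[OF inj _ a b] by simp
    then show False by simp
  qed
  have ac: "a \<noteq> c"
  proof
    assume "a = c"
    then have "(0::nat,a) = (2,c)" using inj_onD[OF inj _ a c] by simp
    then show False by simp
  qed
  have bc: "b \<noteq> c"
  proof
    assume "b = c"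
    then have "(1::nat,b) = (2,c)" using inj_onD[OF inj _ b c] by simp
    then show False by simp
  qed
  have a3: "a \<in> {0,1,2}" using sub a unfolding grid_def l3 by blast
  have b3: "b \<in> {0,1,2}" using sub b unfolding grid_def l3 by blast
  have c3: "c \<in> {0,1,2}" using sub c unfolding grid_def l3 by blast
  have w: "[(0,a),(1,b),(2,c)] \<in> set transL" by (rule witL[OF a3 b3 c3 ab ac bc])
  have "\<forall>x\<in>set [(0,a),(1,b),(2,c)]. x \<in> set L" using a b c T(2) by auto
  then show "hasT L" unfolding hasT_def using w by blast
next
  assume "hasT L"
  then obtain t where t: "t \<in> set transL" "set t \<subseteq> set L" by (auto simp: hasT_def)
  have "transversal 3 (set t)" using t(1) by (rule trL)
  then show "has_transversal 3 (set L)" using t(2) by (auto simp: has_transversal_def)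
qed

lemma go_iff: "game_over 3 h \<longleftrightarrow> go h"
  by (simp add: game_over_def go_def claimed_cl hasT_iff)

lemma sound:
  assumes "chk f p h0" "legal_play 3 (h0 @ t)" "follows p strat (h0 @ t)"
  shows "(game_over 3 (h0 @ t) \<longrightarrow> \<not> has_transversal 3 (claimed (1 - p) (h0 @ t))) \<and>
    (\<not> game_over 3 (h0 @ t) \<and> length (h0 @ t) mod 2 = p \<longrightarrow> strat (h0 @ t) \<in> grid 3 - set (h0 @ t))"
  using assms
proof (induction t arbitrary: h0 f)
  case Nil
  then obtain f' where f: "f = Suc f'" by (cases f) auto
  have ch: "chk (Suc f') p h0" using Nil.prems(1) f by simp
  show ?case
  proof (intro conjI impI)
    assume "game_over 3 (h0 @ [])"
    then have "go h0" by (simp add: go_iff)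
    then have "\<not> hasT (cl (1 - p) h0)" using ch by simp
    then show "\<not> has_transversal 3 (claimed (1 - p) (h0 @ []))" by (simp add: claimed_cl hasT_iff)
  next
    assume a: "\<not> game_over 3 (h0 @ []) \<and> length (h0 @ []) mod 2 = p"
    then have "\<not> go h0" "length h0 mod 2 = p" by (simp_all add: go_iff)
    then have "appl (strat h0) (\<lambda>c. c \<in> set cellsL \<and> c \<notin> set h0 \<and> chk f' p (h0 @ [c]))"
      using ch by simp
    then show "strat (h0 @ []) \<in> grid 3 - set (h0 @ [])" by (simp add: appl_def grid3)
  qed
next
  case (Cons c t)
  then obtain f' where f: "f = Suc f'" by (cases f) auto
  have ch: "chk (Suc f') p h0" using Cons.prems(1) f by simp
  let ?h = "h0 @ c # t"
  have tk: "take (length h0) ?h = h0" by simp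
  have "\<forall>k < length ?h. \<not> game_over 3 (take k ?h)" using Cons.prems(2) unfolding legal_play_def by blast
  moreover have "length h0 < length ?h" by simp
  ultimately have "\<not> game_over 3 (take (length h0) ?h)" by blast
  then have ngo: "\<not> go h0" by (simp add: go_iff)
  have "chk f' p (h0 @ [c])"
  proof (cases "length h0 mod 2 = p")
    case True
    have "\<forall>k < length ?h. k mod 2 = p \<longrightarrow> ?h ! k = strat (take k ?h)"
      using Cons.prems(3) unfolding follows_def by blast
    moreover have "length h0 < length ?h" by simp
    ultimately have "?h ! length h0 = strat (take (length h0) ?h)" using True by blast
    then have cs: "c = strat h0" by simp
    have "appl (strat h0) (\<lambda>c. c \<in> set cellsL \<and> c \<notin> set h0 \<and> chk f' p (h0 @ [c]))"
      using ch ngo True by simp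
    then show ?thesis using cs by (simp add: appl_def)
  next
    case False
    have "c \<in> set cellsL" using Cons.prems(2) unfolding legal_play_def grid3 by auto
    moreover have "c \<notin> set h0" using Cons.prems(2) unfolding legal_play_def by auto
    ultimately have mem: "c \<in> set (filter (\<lambda>c. c \<notin> set h0) cellsL)" by simp
    have L: "list_all (\<lambda>c. chk f' p (h0 @ [c])) (filter (\<lambda>c. c \<notin> set h0) cellsL)"
      using ch ngo False by simp
    show ?thesis using bspec[OF L[unfolded list_all_iff] mem] by simp
  qed
  then show ?case using Cons.IH[of f' "h0 @ [c]"] Cons.prems(2,3) by simp
qed

lemma chk1: "chk (Suc (Suc (Suc (Suc (Suc (Suc (Suc (Suc (Suc (Suc 0)))))))))) 1 []"
  by code_simp

lemma chk0: "chk (Suc (Suc (Suc (Suc (Suc (Suc (Suc (Suc (Suc (Suc 0)))))))))) 0 []"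
  by code_simp

lemma nonlosing: assumes "chk f p []" shows "nonlosing_strategy 3 p strat"
  unfolding nonlosing_strategy_def legal_strategy_def
  using sound[OF assms, of ] by (metis append_Nil)

theorem mainTheorem2:
  shows "(\<exists>s. nonlosing_strategy 3 0 s) \<and> (\<exists>s. nonlosing_strategy 3 1 s)"
  using nonlosing[OF chk0] nonlosing[OF chk1] by blast

end
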